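(* Fix a positive integer $N$ and let $\varphi:\mathbb T\to\mathbb C$ be Riemann integrable. Then for every $\epsilon>0$ and $\delta>0$ there exists $\psi\in\mathscr B(\mathbb T)$ such that $$\limsup_{\substack{q\to\infty\\ d(q)\le N}}\frac{1}{\phi(q)}\Big|\big\{p\in\mathbb Z_q^\times: q^{-1/2}|g_\varphi(p,q)-g_\psi(p,q)|>\delta\big\}\Big|<\epsilon .$$
   Context: $\mathbb T=\mathbb R/\mathbb Z$. $d(q)$ is the number of positive divisors of $q$. $\mathbb Z_q^\times=\{p\in\{1,\dots,q\}:\gcd(p,q)=1\}$, $\phi(q)=|\mathbb Z_q^\times|$. $e(x)=e^{2\pi i x}$, $e_q(x)=e^{2\pi i x/q}$, and $g_\varphi(p,q)=\sum_{h=0}^{q-1}\varphi(h/q)\,e_q(ph^2)$. With $\widehat\psi_k=\int_0^1\psi(x)e(-kx)\,dx$, $\mathscr B(\mathbb T)=\{\psi:\mathbb T\to\mathbb C:\sum_{k\in\mathbb Z}k^2|\widehat\psi_k|<\infty\}$. *)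

theory Defs
  imports "HOL-Analysis.Analysis" "HOL-Number_Theory.Number_Theory"
begin

text \<open>Functions on the torus T = R/Z are represented as 1-periodic functions real => complex.\<close>

definition on_torus :: "(real \<Rightarrow> complex) \<Rightarrow> bool" where
  "on_torus f \<longleftrightarrow> (\<forall>x. f (x + 1) = f x)"

definition riemann_integrable_real01 :: "(real \<Rightarrow> real) \<Rightarrow> bool" where
  "riemann_integrable_real01 f \<longleftrightarrow>
     bounded (f ` {0..1}) \<and>
     (\<forall>e>0. \<exists>(n::nat) (x::nat \<Rightarrow> real).
        x 0 = 0 \<and> x n = 1 \<and> (\<forall>i<n. x i < x (Suc i)) \<and>
        (\<Sum>i<n. (Sup (f ` {x i..x (Suc i)}) - Inf (f ` {x i..x (Suc i)})) * (x (Suc i) - x i)) < e)"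

definition riemann_integrable_torus :: "(real \<Rightarrow> complex) \<Rightarrow> bool" where
  "riemann_integrable_torus f \<longleftrightarrow>
     riemann_integrable_real01 (\<lambda>x. Re (f x)) \<and> riemann_integrable_real01 (\<lambda>x. Im (f x))"

definition e_fun :: "real \<Rightarrow> complex" where
  "e_fun x = exp (2 * pi * \<i> * complex_of_real x)"

definition fourier_coeff :: "(real \<Rightarrow> complex) \<Rightarrow> int \<Rightarrow> complex" where
  "fourier_coeff \<psi> k = integral {0..1} (\<lambda>x. \<psi> x * e_fun (- real_of_int k * x))"

definition B_torus :: "(real \<Rightarrow> complex) set" where
  "B_torus = {\<psi>. on_torus \<psi> \<and> continuous_on UNIV \<psi> \<and>
      (\<lambda>k::int. (real_of_int k)^2 * norm (fourier_coeff \<psi> k)) summable_on UNIV}"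

definition num_divisors :: "nat \<Rightarrow> nat" where
  "num_divisors q = card {d. d dvd q}"

definition units_mod :: "nat \<Rightarrow> nat set" where
  "units_mod q = {p \<in> {1..q}. coprime p q}"

definition gauss_sum :: "(real \<Rightarrow> complex) \<Rightarrow> nat \<Rightarrow> nat \<Rightarrow> complex" where
  "gauss_sum \<phi> p q = (\<Sum>h<q. \<phi> (real h / real q) * e_fun (real (p * h^2) / real q))"

end

theory Submission
  imports Defs
begin

lemma e_fun_add: "e_fun (a + b) = e_fun a * e_fun b"
  unfolding e_fun_def by (simp add: distrib_left exp_add)

lemma e_fun_int: "e_fun (of_int m) = 1"
  unfolding e_fun_def by (subst exp_eq_1) auto

lemma e_fun_nat: "e_fun (of_nat m) = 1"
  using e_fun_int[of "int m"] by simp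

lemma e_fun_periodic: "e_fun (x + 1) = e_fun x"
  using e_fun_int[of 1] by (simp add: e_fun_add)

lemma e_fun_0[simp]: "e_fun 0 = 1" using e_fun_int[of 0] by simp

lemma norm_e_fun[simp]: "norm (e_fun x) = 1"
  unfolding e_fun_def by simp

lemma cnj_e_fun: "cnj (e_fun x) = e_fun (- x)"
  unfolding e_fun_def by (simp add: exp_cnj)

lemma e_fun_minus: "e_fun (- x) * e_fun x = 1"
  by (metis add.left_inverse e_fun_0 e_fun_add)

lemma continuous_e_fun: "continuous_on UNIV e_fun"
  unfolding e_fun_def by (intro continuous_intros)

fun ev :: "(complex \<times> int) list \<Rightarrow> real \<Rightarrow> complex" where
  "ev [] x = 0"
| "ev ((c,k)#xs) x = c * e_fun (of_int k * x) + ev xs x"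

lemma ev_append: "ev (xs @ ys) x = ev xs x + ev ys x"
  by (induction xs) auto

definition mulp :: "(complex \<times> int) list \<Rightarrow> (complex \<times> int) list \<Rightarrow> (complex \<times> int) list" where
  "mulp xs ys = concat (map (\<lambda>(c,k). map (\<lambda>(d,l). (c*d, k+l)) ys) xs)"

lemma ev_map1: "ev (map (\<lambda>(d,l). (c*d, k+l)) ys) x = c * e_fun (of_int k * x) * ev ys x"
  by (induction ys) (auto simp: algebra_simps e_fun_add[symmetric])

lemma ev_mulp: "ev (mulp xs ys) x = ev xs x * ev ys x"
  unfolding mulp_def by (induction xs) (auto simp: ev_append ev_map1 algebra_simps)

definition tp :: "(real \<Rightarrow> complex) \<Rightarrow> bool" where
  "tp g \<longleftrightarrow> (\<exists>xs. \<forall>x. g x = ev xs x)"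

lemma tp_const: "tp (\<lambda>x. c)"
  unfolding tp_def by (rule exI[of _ "[(c,0)]"]) simp

lemma tp_add: "tp f \<Longrightarrow> tp g \<Longrightarrow> tp (\<lambda>x. f x + g x)"
  unfolding tp_def by (metis ev_append)

lemma tp_mult: "tp f \<Longrightarrow> tp g \<Longrightarrow> tp (\<lambda>x. f x * g x)"
  unfolding tp_def by (metis ev_mulp)

lemma tp_real_poly:
  assumes "real_polynomial_function (p :: complex \<Rightarrow> real)"
  shows "tp (\<lambda>x. complex_of_real (p (e_fun x)))"
  using assms
proof induction
  case (linear f)
  then interpret bounded_linear f .
  have fz: "f z = Re z * f 1 + Im z * f \<i>" for z
  proof -
    have "z = Re z *\<^sub>R 1 + Im z *\<^sub>R \<i>" by (simp add: complex_eq_iff)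
    then have "f z = f (Re z *\<^sub>R 1 + Im z *\<^sub>R \<i>)" by simp
    also have "\<dots> = Re z * f 1 + Im z * f \<i>" by (simp add: add scale)
    finally show ?thesis .
  qed
  have re: "complex_of_real (Re w) = (w + cnj w) / 2" for w by (simp add: complex_add_cnj)
  have im: "complex_of_real (Im w) = (w - cnj w) / (2 * \<i>)" for w
  proof -
    have "w - cnj w = 2 * \<i> * complex_of_real (Im w)" by (simp add: complex_eq_iff)
    then show ?thesis by simp
  qed
  have "complex_of_real (f (e_fun x)) = ev [(f 1 / 2 + f \<i> / (2*\<i>), 1), (f 1 / 2 - f \<i> / (2*\<i>), -1)] x" for x
    unfolding fz[of "e_fun x"] of_real_add of_real_mult re im cnj_e_fun
    by (simp add: field_simps)
  then show ?case unfolding tp_def by blast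
next
  case (const c) then show ?case using tp_const by simp
next
  case (add f g) then show ?case using tp_add by simp
next
  case (mult f g) then show ?case using tp_mult by simp
qed

lemma has_integral_e_fun:
  assumes "m \<noteq> 0"
  shows "((\<lambda>x. e_fun (of_int m * x)) has_integral 0) {0..1}"
proof -
  define c where "c = 2 * complex_of_real pi * \<i> * of_int m"
  have c0: "c \<noteq> 0" using assms by (simp add: c_def)
  have ef: "e_fun (of_int m * x) = exp (c * of_real x)" for x
    by (simp add: e_fun_def c_def mult_ac)
  have "((\<lambda>x. exp (c * of_real x) / c) has_vector_derivative exp (c * of_real x)) (at x within {0..1})" for x
  proof -
    have "((\<lambda>z. exp (c * z) / c) has_field_derivative exp (c * of_real x)) (at (of_real x))"
      using c0 by (auto intro!: derivative_eq_intros)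
    from has_vector_derivative_real_field[OF this] show ?thesis .
  qed
  from fundamental_theorem_of_calculus[of 0 1, OF _ this]
  have "((\<lambda>x. exp (c * of_real x)) has_integral (exp c / c - 1 / c)) {0..1}" by simp
  moreover have "exp c = 1" using e_fun_int[of m] by (simp add: e_fun_def c_def mult_ac)
  ultimately show ?thesis by (simp add: ef)
qed

lemma ev_fourier_int:
  assumes "\<forall>(c,k)\<in>set xs. k \<noteq> n"
  shows "((\<lambda>x. ev xs x * e_fun (- real_of_int n * x)) has_integral 0) {0..1}"
  using assms
proof (induction xs)
  case Nil then show ?case by simp
next
  case (Cons a xs)
  obtain c k where a: "a = (c,k)" by fastforce
  have kn: "k - n \<noteq> 0" using Cons.prems a by auto
  have eq: "e_fun (of_int k * x) * e_fun (- real_of_int n * x) = e_fun (of_int (k-n) * x)" for x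
    by (simp add: e_fun_add[symmetric] algebra_simps)
  have "((\<lambda>x. c * e_fun (of_int (k-n) * x)) has_integral c * 0) {0..1}"
    by (intro has_integral_mult_right has_integral_e_fun kn)
  then have "((\<lambda>x. c * e_fun (of_int (k-n) * x) + ev xs x * e_fun (- real_of_int n * x)) has_integral 0 + 0) {0..1}"
    using Cons by (intro has_integral_add) auto
  moreover have "(\<lambda>x. ev (a#xs) x * e_fun (- real_of_int n * x)) = (\<lambda>x. c * e_fun (of_int (k-n) * x) + ev xs x * e_fun (- real_of_int n * x))"
    using a by (intro ext) (simp only: ev.simps distrib_right mult.assoc eq)
  ultimately show ?case by simp
qed

lemma tp_in_B:
  assumes "tp g" "continuous_on UNIV g"
  shows "g \<in> B_torus"
proof -
  obtain xs where g: "\<And>x. g x = ev xs x" using assms unfolding tp_def by blast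
  have per: "ev xs (x+1) = ev xs x" for x
    apply (induction xs) apply simp apply (case_tac a) by (simp add: distrib_left e_fun_add e_fun_int)
  have fz: "fourier_coeff g n = 0" if "n \<notin> snd ` set xs" for n
  proof -
    have "\<forall>(c,k)\<in>set xs. k \<noteq> n" using that by force
    from ev_fourier_int[OF this] show ?thesis
      unfolding fourier_coeff_def g by (simp add: integral_unique)
  qed
  have "(\<lambda>k::int. (real_of_int k)^2 * norm (fourier_coeff g k)) summable_on UNIV \<longleftrightarrow>
        (\<lambda>k::int. (real_of_int k)^2 * norm (fourier_coeff g k)) summable_on (snd ` set xs)"
    by (rule summable_on_cong_neutral) (auto simp: fz)
  then have "(\<lambda>k::int. (real_of_int k)^2 * norm (fourier_coeff g k)) summable_on UNIV" by simp
  then show ?thesis using assms(2) unfolding B_torus_def on_torus_def by (auto simp: g per)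
qed


lemma e_fun_nat_mult: "e_fun (real n * x) = e_fun x ^ n"
proof -
  have "e_fun (real n * x) = exp (of_nat n * (2 * pi * \<i> * complex_of_real x))"
    unfolding e_fun_def by (simp add: mult_ac)
  then show ?thesis unfolding e_fun_def exp_of_nat_mult .
qed

lemma e_fun_eq_1: assumes "e_fun x = 1" shows "\<exists>n::int. x = of_int n"
proof -
  from assms have "exp (2 * pi * \<i> * complex_of_real x) = 1" unfolding e_fun_def .
  then obtain n::int where "Im (2 * pi * \<i> * complex_of_real x) = of_int (2*n) * pi"
    by (subst (asm) exp_eq_1) blast
  then have "2 * pi * x = 2 * pi * of_int n" by simp
  then show ?thesis by auto
qed

lemma orth:
  assumes "q > 0"
  shows "(\<Sum>p\<in>{1..q}. e_fun (real p * (of_int k / real q))) = (if int q dvd k then of_nat q else 0)"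
proof -
  define w where "w = e_fun (of_int k / real q)"
  have sw: "(\<Sum>p\<in>{1..q}. e_fun (real p * (of_int k / real q))) = (\<Sum>p\<in>{1..q}. w ^ p)"
    unfolding w_def by (simp only: e_fun_nat_mult)
  have wq: "w ^ q = 1"
    unfolding w_def e_fun_nat_mult[symmetric] using assms e_fun_int[of k] by simp
  show ?thesis
  proof (cases "int q dvd k")
    case True
    then obtain t where "k = int q * t" by blast
    then have "w = 1" unfolding w_def using assms e_fun_int[of t] by simp
    then show ?thesis using True sw by simp
  next
    case False
    have w1: "w \<noteq> 1"
    proof
      assume "w = 1"
      then obtain n::int where "of_int k / real q = of_int n" unfolding w_def using e_fun_eq_1 by blast
      then have "of_int k = real q * of_int n" using assms by (simp add: field_simps)
      then have "k = int q * n" by (metis of_int_eq_iff of_int_mult of_int_of_nat_eq)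
      then show False using False by simp
    qed
    have "(\<Sum>p\<in>{1..q}. w ^ p) = (\<Sum>i<q. w ^ Suc i)"
    proof -
      have "(\<Sum>p\<in>{1..q}. w ^ p) = (\<Sum>p\<in>Suc ` {..<q}. w ^ p)"
        by (simp add: image_Suc_lessThan)
      also have "\<dots> = (\<Sum>i<q. w ^ Suc i)" by (subst sum.reindex) auto
      finally show ?thesis .
    qed
    also have "\<dots> = w * (\<Sum>i<q. w ^ i)" by (simp add: sum_distrib_left)
    also have "\<dots> = 0" using geometric_sum[OF w1, of q] wq by simp
    finally show ?thesis using False sw by simp
  qed
qed

lemma gauss_sq:
  fixes f :: "real \<Rightarrow> complex"
  assumes "q > 0"
  shows "complex_of_real (\<Sum>p\<in>{1..q}. (cmod (gauss_sum f p q))\<^sup>2) =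
    of_nat q * (\<Sum>h<q. \<Sum>h'<q. if int q dvd (int h^2 - int h'^2) then f (real h / real q) * cnj (f (real h' / real q)) else 0)"
proof -
  define a where "a h = f (real h / real q)" for h :: nat
  define c where "c h h' = (of_int (int h^2 - int h'^2) / real q :: real)" for h h' :: nat
  have trm: "(a h * e_fun (real (p * h^2) / real q)) * cnj (a h' * e_fun (real (p * h'^2) / real q))
      = a h * cnj (a h') * e_fun (real p * c h h')" for p h h'
  proof -
    have "e_fun (real (p * h^2) / real q) * cnj (e_fun (real (p * h'^2) / real q)) = e_fun (real p * c h h')"
    proof -
      have "cnj (e_fun y) = e_fun (- y)" for y unfolding e_fun_def by (simp add: exp_cnj)
      moreover have "real (p * h^2) / real q + - (real (p * h'^2) / real q) = real p * c h h'"
        unfolding c_def using assms by (simp add: field_simps)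
      ultimately show ?thesis by (metis e_fun_add)
    qed
    then show ?thesis by (simp add: mult_ac)
  qed
  have "complex_of_real (\<Sum>p\<in>{1..q}. (cmod (gauss_sum f p q))\<^sup>2) =
      (\<Sum>p\<in>{1..q}. gauss_sum f p q * cnj (gauss_sum f p q))"
    by (simp only: of_real_sum complex_norm_square)
  also have "\<dots> = (\<Sum>p\<in>{1..q}. \<Sum>h<q. \<Sum>h'<q. a h * cnj (a h') * e_fun (real p * c h h'))"
    unfolding gauss_sum_def a_def[symmetric] cnj_sum sum_product trm ..
  also have "\<dots> = (\<Sum>h<q. \<Sum>p\<in>{1..q}. \<Sum>h'<q. a h * cnj (a h') * e_fun (real p * c h h'))"
    by (rule sum.swap)
  also have "\<dots> = (\<Sum>h<q. \<Sum>h'<q. \<Sum>p\<in>{1..q}. a h * cnj (a h') * e_fun (real p * c h h'))"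
    by (intro sum.cong refl sum.swap)
  also have "\<dots> = (\<Sum>h<q. \<Sum>h'<q. a h * cnj (a h') * (\<Sum>p\<in>{1..q}. e_fun (real p * c h h')))"
    by (simp add: sum_distrib_left)
  also have "\<dots> = (\<Sum>h<q. \<Sum>h'<q. a h * cnj (a h') * (if int q dvd (int h^2 - int h'^2) then of_nat q else 0))"
    unfolding c_def orth[OF assms] ..
  also have "\<dots> = of_nat q * (\<Sum>h<q. \<Sum>h'<q. if int q dvd (int h^2 - int h'^2) then a h * cnj (a h') else 0)"
    by (simp add: sum_distrib_left mult_ac if_distrib cong: if_cong)
  finally show ?thesis unfolding a_def .
qed

lemma dvd_prod_split:
  fixes a b :: int and q :: nat
  assumes "q > 0" "int q dvd a * b"
  shows "\<exists>d. d dvd q \<and> int d dvd a \<and> int (q div d) dvd b"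
proof -
  define g where "g = gcd a (int q)"
  have g0: "g > 0" using assms(1) by (simp add: g_def)
  have gq: "g dvd int q" by (simp add: g_def)
  have ga: "g dvd a" by (simp add: g_def)
  define d where "d = nat g"
  have dg: "int d = g" using g0 by (simp add: d_def)
  have dq: "d dvd q" using gq dg by (metis int_dvd_int_iff)
  have qd: "int (q div d) = int q div g" using dg by (simp add: zdiv_int)
  have cop: "coprime (a div g) (int q div g)"
    unfolding g_def using assms(1) by (intro div_gcd_coprime) simp
  obtain a' where a': "a = g * a'" using ga by blast
  obtain e' where e': "int q = g * e'" using gq by blast
  have "g * e' dvd g * (a' * b)" using assms(2) a' e' by (simp add: mult.assoc)
  then have "e' dvd a' * b" using g0 by simp
  moreover have "coprime e' a'" using cop a' e' g0 by (simp add: coprime_commute)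
  ultimately have "e' dvd b" by (simp add: coprime_dvd_mult_right_iff)
  moreover have "int q div g = e'" using e' g0 by simp
  ultimately show ?thesis using dq dg ga qd by metis
qed

lemma card_res:
  fixes L q r :: nat
  assumes "L > 0" "L dvd q" "r < L"
  shows "card {x\<in>{..<q}. x mod L = r} = q div L"
proof -
  obtain t where t: "q = L * t" using assms(2) by blast
  have qt: "q div L = t" using t assms(1) by simp
  have S1: "{x\<in>{..<q}. x mod L = r} \<subseteq> (\<lambda>j. r + L * j) ` {..<t}"
  proof
    fix x assume x: "x \<in> {x\<in>{..<q}. x mod L = r}"
    then have "x = r + L * (x div L)" by (metis (mono_tags) mem_Collect_eq mod_mult_div_eq mult.commute)
    moreover have "x div L < t" using x t assms(1)
      by (metis (no_types, lifting) div_less_iff_less_mult lessThan_iff mem_Collect_eq mult.commute)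
    ultimately show "x \<in> (\<lambda>j. r + L * j) ` {..<t}" by blast
  qed
  have S2: "(\<lambda>j. r + L * j) ` {..<t} \<subseteq> {x\<in>{..<q}. x mod L = r}"
  proof
    fix x assume "x \<in> (\<lambda>j. r + L * j) ` {..<t}"
    then obtain j where j: "j < t" "x = r + L * j" by blast
    have "r + L * j < L + L * j" using assms(3) by simp
    also have "\<dots> = L * Suc j" by simp
    also have "\<dots> \<le> L * t" using j(1) by (intro mult_le_mono2) simp
    finally have "x < q" using j t by simp
    moreover have "x mod L = r" using j assms(3) by simp
    ultimately show "x \<in> {x\<in>{..<q}. x mod L = r}" by simp
  qed
  have "{x\<in>{..<q}. x mod L = r} = (\<lambda>j. r + L * j) ` {..<t}" using S1 S2 by (rule subset_antisym)
  moreover have "inj_on (\<lambda>j. r + L * j) {..<t}" using assms(1) by (intro inj_onI) simp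
  ultimately show ?thesis using qt by (simp add: card_image)
qed

lemma card_T:
  fixes q d h :: nat
  assumes "q > 0" "d dvd q"
  shows "card {h'\<in>{..<q}. int d dvd int h' - int h \<and> int (q div d) dvd int h' + int h}
          \<le> (if int (gcd d (q div d)) dvd 2 * int h then gcd d (q div d) else 0)"
proof -
  define e where "e = q div d"
  define m where "m = gcd d e"
  define L where "L = lcm d e"
  define T where "T = {h'\<in>{..<q}. int d dvd int h' - int h \<and> int e dvd int h' + int h}"
  have d0: "d > 0" using assms by (metis dvd_0_left_iff gr0I less_irrefl)
  have de: "d * e = q" using assms(2) by (simp add: e_def)
  have e0: "e > 0" using de assms(1) by (metis gr0I mult_0_right less_irrefl)
  have L0: "L > 0" using d0 e0 by (simp add: L_def lcm_pos_nat)
  have mL: "m * L = q" unfolding m_def L_def using de by (metis prod_gcd_lcm_nat)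
  have Lq: "L dvd q" using mL by (metis dvd_triv_right)
  have qL: "q div L = m"
  proof -
    have "q div L = (m * L) div L" using mL by simp
    then show ?thesis using L0 by simp
  qed
  show ?thesis
  proof (cases "T = {}")
    case True
    then have "card T = 0" by simp
    then show ?thesis unfolding T_def e_def by (metis le0)
  next
    case False
    then obtain h0 where h0: "h0 < q" "int d dvd int h0 - int h" "int e dvd int h0 + int h"
      unfolding T_def by blast
    have md: "int m dvd int d" and me: "int m dvd int e" by (simp_all add: m_def)
    have "int m dvd (int h0 + int h) - (int h0 - int h)"
      by (rule dvd_diff[OF dvd_trans[OF me h0(3)] dvd_trans[OF md h0(2)]])
    then have m2h: "int m dvd 2 * int h" by (simp add: algebra_simps mult_2)
    have sub: "T \<subseteq> {x\<in>{..<q}. x mod L = h0 mod L}"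
    proof
      fix x assume "x \<in> T"
      then have x: "x < q" "int d dvd int x - int h" "int e dvd int x + int h" unfolding T_def by auto
      have "int d dvd (int x - int h) - (int h0 - int h)" using x(2) h0(2) by (rule dvd_diff)
      then have dx: "int d dvd int x - int h0" by simp
      have "int e dvd (int x + int h) - (int h0 + int h)" using x(3) h0(3) by (rule dvd_diff)
      then have ex: "int e dvd int x - int h0" by simp
      have "lcm (int d) (int e) dvd int x - int h0" using dx ex by (rule lcm_least)
      then have "int L dvd int x - int h0" by (simp add: L_def)
      then have "int x mod int L = int h0 mod int L" by (simp add: mod_eq_dvd_iff)
      then have "x mod L = h0 mod L" by (metis of_nat_eq_iff of_nat_mod)
      then show "x \<in> {x\<in>{..<q}. x mod L = h0 mod L}" using x by simp
    qed
    have "card T \<le> card {x\<in>{..<q}. x mod L = h0 mod L}" by (rule card_mono[OF _ sub]) simp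
    also have "\<dots> = m" using card_res[OF L0 Lq, of "h0 mod L"] L0 qL by simp
    finally show ?thesis using m2h by (simp add: T_def m_def e_def)
  qed
qed

lemma card_roots:
  fixes q h :: nat
  assumes "q > 0"
  shows "card {h'\<in>{..<q}. int q dvd int h^2 - int h'^2}
       \<le> (\<Sum>d\<in>{d. d dvd q}. if int (gcd d (q div d)) dvd 2 * int h then gcd d (q div d) else 0)"
proof -
  define T where "T d = {h'\<in>{..<q}. int d dvd int h' - int h \<and> int (q div d) dvd int h' + int h}" for d
  have fin: "finite {d. d dvd q}" using assms by simp
  have "{h'\<in>{..<q}. int q dvd int h^2 - int h'^2} \<subseteq> (\<Union>d\<in>{d. d dvd q}. T d)"
  proof
    fix h' assume "h' \<in> {h'\<in>{..<q}. int q dvd int h^2 - int h'^2}"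
    then have h': "h' < q" "int q dvd int h^2 - int h'^2" by auto
    have "(int h' - int h) * (int h' + int h) = - (int h^2 - int h'^2)" by (simp add: algebra_simps power2_eq_square)
    then have "int q dvd (int h' - int h) * (int h' + int h)" using h'(2) by (simp only: dvd_minus_iff)
    from dvd_prod_split[OF assms this] obtain d where "d dvd q" "int d dvd int h' - int h" "int (q div d) dvd int h' + int h"
      by blast
    then show "h' \<in> (\<Union>d\<in>{d. d dvd q}. T d)" using h'(1) by (auto simp: T_def)
  qed
  then have "card {h'\<in>{..<q}. int q dvd int h^2 - int h'^2} \<le> card (\<Union>d\<in>{d. d dvd q}. T d)"
    by (intro card_mono) (auto simp: T_def intro!: finite_UN_I fin)
  also have "\<dots> \<le> (\<Sum>d\<in>{d. d dvd q}. card (T d))" by (rule card_UN_le[OF fin])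
  also have "\<dots> \<le> (\<Sum>d\<in>{d. d dvd q}. if int (gcd d (q div d)) dvd 2 * int h then gcd d (q div d) else 0)"
    by (intro sum_mono) (use card_T[OF assms] in \<open>auto simp: T_def\<close>)
  finally show ?thesis .
qed

lemma scale_sum:
  fixes F :: "real \<Rightarrow> real" and q m :: nat
  assumes "\<And>x. F x \<ge> 0" "m > 0" "m dvd 2 * q" "q > 0"
  shows "(\<Sum>h\<in>{h\<in>{..<q}. int m dvd 2 * int h}. F (real h / real q)) \<le> (\<Sum>j<2*q div m. F (real j / real (2*q div m)))"
proof -
  define Q where "Q = 2*q div m"
  have mQ: "m * Q = 2*q" using assms(3) by (simp add: Q_def)
  define A where "A = {h\<in>{..<q}. int m dvd 2 * int h}"
  have "(\<Sum>h\<in>A. F (real h / real q)) = (\<Sum>h\<in>A. F (real (2*h) / real (2*q)))"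
    by (intro sum.cong refl) simp
  also have "\<dots> = (\<Sum>k\<in>(\<lambda>h. 2*h) ` A. F (real k / real (2*q)))"
    by (subst sum.reindex) (auto simp: inj_on_def)
  also have "\<dots> \<le> (\<Sum>k\<in>(\<lambda>j. m*j) ` {..<Q}. F (real k / real (2*q)))"
  proof (rule sum_mono2)
    show "finite ((\<lambda>j. m*j) ` {..<Q})" by simp
    show "(\<lambda>h. 2*h) ` A \<subseteq> (\<lambda>j. m*j) ` {..<Q}"
    proof
      fix k assume "k \<in> (\<lambda>h. 2*h) ` A"
      then obtain h where h: "h < q" "int m dvd 2 * int h" "k = 2*h" by (auto simp: A_def)
      then have "m dvd k" by (metis int_dvd_int_iff of_nat_mult of_nat_numeral)
      then obtain j where j: "k = m * j" by blast
      have "m * j < m * Q" using h j mQ by simp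
      then have "j < Q" by simp
      then show "k \<in> (\<lambda>j. m*j) ` {..<Q}" using j by blast
    qed
  qed (use assms(1) in auto)
  also have "\<dots> = (\<Sum>j<Q. F (real (m*j) / real (2*q)))"
    using assms(2) by (subst sum.reindex) (auto simp: inj_on_def)
  also have "\<dots> = (\<Sum>j<Q. F (real j / real Q))"
  proof (intro sum.cong refl)
    fix j
    have "real (2*q) = real m * real Q" using mQ by (metis of_nat_mult)
    then show "F (real (m*j) / real (2*q)) = F (real j / real Q)" using assms(2) by simp
  qed
  finally show ?thesis unfolding A_def Q_def .
qed

lemma second_moment:
  fixes f :: "real \<Rightarrow> complex" and q :: nat
  assumes q0: "q > 0"
  shows "(\<Sum>p\<in>{1..q}. (cmod (gauss_sum f p q))\<^sup>2) \<le> real q * (\<Sum>d\<in>{d. d dvd q}.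
     real (gcd d (q div d)) * (\<Sum>j<2*q div gcd d (q div d). (cmod (f (real j / real (2*q div gcd d (q div d)))))\<^sup>2))"
proof -
  define C where "C h h' = (int q dvd int h^2 - int h'^2)" for h h' :: nat
  define a where "a h = cmod (f (real h / real q))" for h :: nat
  define G where "G x = (cmod (f x))\<^sup>2" for x
  define md where "md d = gcd d (q div d)" for d :: nat
  define S where "S = (\<Sum>p\<in>{1..q}. (cmod (gauss_sum f p q))\<^sup>2)"
  have Csym: "C h h' = C h' h" for h h'
  proof -
    have "int h'^2 - int h^2 = - (int h^2 - int h'^2)" by simp
    then show ?thesis unfolding C_def by (metis dvd_minus_iff)
  qed
  have S0: "S \<ge> 0" unfolding S_def by (intro sum_nonneg) simp
  have "S = cmod (complex_of_real S)" using S0 by simp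
  also have "\<dots> = cmod (of_nat q * (\<Sum>h<q. \<Sum>h'<q. if C h h' then f (real h / real q) * cnj (f (real h' / real q)) else 0))"
    unfolding S_def gauss_sq[OF q0] C_def ..
  also have "\<dots> = real q * cmod (\<Sum>h<q. \<Sum>h'<q. if C h h' then f (real h / real q) * cnj (f (real h' / real q)) else 0)"
    by (simp add: norm_mult)
  also have "\<dots> \<le> real q * (\<Sum>h<q. \<Sum>h'<q. if C h h' then a h * a h' else 0)"
  proof (intro mult_left_mono)
    have "cmod (\<Sum>h<q. \<Sum>h'<q. if C h h' then f (real h / real q) * cnj (f (real h' / real q)) else 0)
        \<le> (\<Sum>h<q. cmod (\<Sum>h'<q. if C h h' then f (real h / real q) * cnj (f (real h' / real q)) else 0))"
      by (rule norm_sum)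
    also have "\<dots> \<le> (\<Sum>h<q. \<Sum>h'<q. cmod (if C h h' then f (real h / real q) * cnj (f (real h' / real q)) else 0))"
      by (intro sum_mono norm_sum)
    also have "\<dots> = (\<Sum>h<q. \<Sum>h'<q. if C h h' then a h * a h' else 0)"
      by (intro sum.cong refl) (simp add: a_def norm_mult)
    finally show "cmod (\<Sum>h<q. \<Sum>h'<q. if C h h' then f (real h / real q) * cnj (f (real h' / real q)) else 0)
        \<le> (\<Sum>h<q. \<Sum>h'<q. if C h h' then a h * a h' else 0)" .
  qed simp
  also have "\<dots> \<le> real q * (\<Sum>h<q. \<Sum>h'<q. if C h h' then ((a h)\<^sup>2 + (a h')\<^sup>2) / 2 else 0)"
  proof (intro mult_left_mono sum_mono)
    fix h h'
    have "0 \<le> (a h - a h')\<^sup>2" by simp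
    then have "a h * a h' \<le> ((a h)\<^sup>2 + (a h')\<^sup>2) / 2" by (simp add: power2_eq_square algebra_simps)
    then show "(if C h h' then a h * a h' else 0) \<le> (if C h h' then ((a h)\<^sup>2 + (a h')\<^sup>2) / 2 else 0)" by simp
  qed simp
  also have "(\<Sum>h<q. \<Sum>h'<q. if C h h' then ((a h)\<^sup>2 + (a h')\<^sup>2) / 2 else 0)
      = (\<Sum>h<q. \<Sum>h'<q. if C h h' then (a h)\<^sup>2 else 0)"
  proof -
    have "(\<Sum>h<q. \<Sum>h'<q. if C h h' then ((a h)\<^sup>2 + (a h')\<^sup>2) / 2 else 0)
        = (\<Sum>h<q. \<Sum>h'<q. if C h h' then (a h)\<^sup>2 else 0) / 2 + (\<Sum>h<q. \<Sum>h'<q. if C h h' then (a h')\<^sup>2 else 0) / 2"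
    proof -
      have "(if C h h' then ((a h)\<^sup>2 + (a h')\<^sup>2) / 2 else 0) = (if C h h' then (a h)\<^sup>2 else 0) / 2 + (if C h h' then (a h')\<^sup>2 else 0) / 2" for h h'
        by simp
      then show ?thesis by (simp add: sum.distrib sum_divide_distrib)
    qed
    also have "(\<Sum>h<q. \<Sum>h'<q. if C h h' then (a h')\<^sup>2 else 0) = (\<Sum>h'<q. \<Sum>h<q. if C h h' then (a h')\<^sup>2 else 0)"
      by (rule sum.swap)
    also have "\<dots> = (\<Sum>h<q. \<Sum>h'<q. if C h h' then (a h)\<^sup>2 else 0)"
      using Csym by simp
    finally show ?thesis by simp
  qed
  also have "(\<Sum>h<q. \<Sum>h'<q. if C h h' then (a h)\<^sup>2 else 0) = (\<Sum>h<q. (a h)\<^sup>2 * real (card {h'\<in>{..<q}. C h h'}))"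
  proof (intro sum.cong refl)
    fix h
    have "(\<Sum>h'<q. if C h h' then (a h)\<^sup>2 else 0) = (\<Sum>h'\<in>{h'\<in>{..<q}. C h h'}. (a h)\<^sup>2)"
      by (rule sum.inter_filter[symmetric]) simp
    also have "\<dots> = (a h)\<^sup>2 * real (card {h'\<in>{..<q}. C h h'})" by simp
    finally show "(\<Sum>h'<q. if C h h' then (a h)\<^sup>2 else 0) = (a h)\<^sup>2 * real (card {h'\<in>{..<q}. C h h'})" .
  qed
  also have "\<dots> \<le> (\<Sum>h<q. (a h)\<^sup>2 * (\<Sum>d\<in>{d. d dvd q}. if int (md d) dvd 2 * int h then real (md d) else 0))"
  proof (intro sum_mono mult_left_mono)
    fix h
    have "real (card {h'\<in>{..<q}. C h h'}) \<le> real (\<Sum>d\<in>{d. d dvd q}. if int (md d) dvd 2 * int h then md d else 0)"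
      using card_roots[OF q0, of h] unfolding C_def md_def by linarith
    then show "real (card {h'\<in>{..<q}. C h h'}) \<le> (\<Sum>d\<in>{d. d dvd q}. if int (md d) dvd 2 * int h then real (md d) else 0)"
      by (simp add: of_nat_sum if_distrib cong: if_cong)
  qed simp
  also have "\<dots> = (\<Sum>d\<in>{d. d dvd q}. real (md d) * (\<Sum>h\<in>{h\<in>{..<q}. int (md d) dvd 2 * int h}. G (real h / real q)))"
  proof -
    have "(\<Sum>h<q. (a h)\<^sup>2 * (\<Sum>d\<in>{d. d dvd q}. if int (md d) dvd 2 * int h then real (md d) else 0))
        = (\<Sum>h<q. \<Sum>d\<in>{d. d dvd q}. if int (md d) dvd 2 * int h then real (md d) * (a h)\<^sup>2 else 0)"
      by (simp add: sum_distrib_left mult_ac if_distrib cong: if_cong)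
    also have "\<dots> = (\<Sum>d\<in>{d. d dvd q}. \<Sum>h<q. if int (md d) dvd 2 * int h then real (md d) * (a h)\<^sup>2 else 0)"
      by (rule sum.swap)
    also have "\<dots> = (\<Sum>d\<in>{d. d dvd q}. real (md d) * (\<Sum>h\<in>{h\<in>{..<q}. int (md d) dvd 2 * int h}. G (real h / real q)))"
    proof (intro sum.cong refl)
      fix d
      have "(\<Sum>h<q. if int (md d) dvd 2 * int h then real (md d) * (a h)\<^sup>2 else 0)
          = (\<Sum>h\<in>{h\<in>{..<q}. int (md d) dvd 2 * int h}. real (md d) * (a h)\<^sup>2)"
        by (rule sum.inter_filter[symmetric]) simp
      then show "(\<Sum>h<q. if int (md d) dvd 2 * int h then real (md d) * (a h)\<^sup>2 else 0)
          = real (md d) * (\<Sum>h\<in>{h\<in>{..<q}. int (md d) dvd 2 * int h}. G (real h / real q))"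
        by (simp add: sum_distrib_left a_def G_def)
    qed
    finally show ?thesis .
  qed
  also have "\<dots> \<le> (\<Sum>d\<in>{d. d dvd q}. real (md d) * (\<Sum>j<2*q div md d. G (real j / real (2*q div md d))))"
  proof (intro sum_mono mult_left_mono)
    fix d assume d: "d \<in> {d. d dvd q}"
    have d0: "d > 0" using d q0 by (metis dvd_0_left_iff gr0I mem_Collect_eq)
    have m0: "md d > 0" using d0 by (simp add: md_def)
    have "md d dvd q" using d by (metis dvd_trans gcd_dvd1 md_def mem_Collect_eq)
    then have "md d dvd 2 * q" by simp
    from scale_sum[of G, OF _ m0 this q0]
    show "(\<Sum>h\<in>{h\<in>{..<q}. int (md d) dvd 2 * int h}. G (real h / real q)) \<le> (\<Sum>j<2*q div md d. G (real j / real (2*q div md d)))"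
      by (simp add: G_def)
  qed simp
  finally show ?thesis unfolding S_def md_def G_def by (simp add: mult_left_mono)
qed


lemma two_pow_le_divisors:
  fixes q :: nat assumes q0: "q > 0"
  shows "2 ^ card (prime_factors q) \<le> num_divisors q"
proof -
  have fin: "finite {d. d dvd q}" using q0 by simp
  have "2 ^ card (prime_factors q) = card (Pow (prime_factors q))" by (simp add: card_Pow)
  also have "\<dots> = card ((\<lambda>S. \<Prod>S) ` Pow (prime_factors q))"
  proof (rule card_image[symmetric], rule inj_onI)
    fix S T assume S: "S \<in> Pow (prime_factors q)" and T: "T \<in> Pow (prime_factors q)" and eq: "\<Prod>S = \<Prod>T"
    have pf: "prime_factors (\<Prod>U) = U" if U: "U \<subseteq> prime_factors q" for U
    proof -
      have finU: "finite U" using U finite_subset by blast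
      have pr: "\<And>p. p \<in> U \<Longrightarrow> prime p" using U by (auto simp: prime_factors_multiplicity)
      then have "0 \<notin> id ` U" by (metis image_id id_apply not_prime_0)
      then have "prime_factors (prod id U) = \<Union>((prime_factors \<circ> id) ` U)"
        by (intro prime_factors_prod finU)
      also have "\<dots> = U" using pr by (auto simp: prime_prime_factors)
      finally show ?thesis by simp
    qed
    have "S = prime_factors (\<Prod>S)" using pf[of S] S by simp
    also have "\<dots> = prime_factors (\<Prod>T)" using eq by simp
    also have "\<dots> = T" using pf[of T] T by simp
    finally show "S = T" .
  qed
  also have "\<dots> \<le> card {d. d dvd q}"
  proof (rule card_mono[OF fin], rule image_subsetI)
    fix S assume S: "S \<in> Pow (prime_factors q)"
    have "\<Prod>S dvd (\<Prod>p\<in>S. p ^ multiplicity p q)"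
    proof (rule prod_dvd_prod)
      fix p assume "p \<in> S"
      then have "multiplicity p q > 0" using S by (auto simp: prime_factors_multiplicity)
      then show "p dvd p ^ multiplicity p q" by (simp add: dvd_power)
    qed
    also have "\<dots> dvd (\<Prod>p\<in>prime_factors q. p ^ multiplicity p q)"
      using S by (intro prod_dvd_prod_subset) auto
    also have "\<dots> = q" using prod_prime_factors[of q] q0 by simp
    finally show "\<Prod>S \<in> {d. d dvd q}" by simp
  qed
  finally show ?thesis unfolding num_divisors_def .
qed

lemma totient_divisors:
  fixes q :: nat assumes q0: "q > 0"
  shows "real q \<le> real (totient q) * real (num_divisors q)"
proof -
  define k where "k = card (prime_factors q)"
  have "real q * (1/2) ^ k = real q * (\<Prod>p\<in>prime_factors q. 1/2)" by (simp add: k_def)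
  also have "\<dots> \<le> real q * (\<Prod>p\<in>prime_factors q. 1 - 1 / real p)"
  proof (intro mult_left_mono prod_mono conjI)
    fix p assume "p \<in> prime_factors q"
    then have "prime p" by (auto simp: prime_factors_multiplicity)
    then have "p \<ge> 2" by (simp add: prime_ge_2_nat)
    then show "1/2 \<le> 1 - 1 / real p" by (simp add: field_simps)
  qed auto
  also have "\<dots> = real (totient q)" by (simp add: totient_formula2)
  finally have t: "real q * (1/2)^k \<le> real (totient q)" .
  have "real q = real q * (1/2)^k * 2^k" by (simp add: power_one_over field_simps)
  also have "\<dots> \<le> real (totient q) * 2^k" using t by (intro mult_right_mono) auto
  also have "\<dots> \<le> real (totient q) * real (num_divisors q)"
  proof (rule mult_left_mono)
    have "real (2 ^ k) \<le> real (num_divisors q)"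
      using two_pow_le_divisors[OF q0] unfolding k_def[symmetric] by (simp only: of_nat_le_iff)
    then show "(2::real) ^ k \<le> real (num_divisors q)" by simp
  qed simp
  finally show ?thesis .
qed


lemma count_lower:
  fixes a b :: real and Q :: nat
  assumes "0 \<le> a" "a \<le> b" "b < 1" "Q > 0"
  shows "(b - a) * real Q - 1 \<le> real (card {j\<in>{..<Q}. a \<le> real j / real Q \<and> real j / real Q \<le> b})"
proof -
  have Q0: "real Q > 0" using assms by simp
  have bQ: "b * real Q < real Q" using assms Q0 by simp
  have "{j\<in>{..<Q}. a \<le> real j / real Q \<and> real j / real Q \<le> b} = {nat \<lceil>a * real Q\<rceil> .. nat \<lfloor>b * real Q\<rfloor>}"
  proof (rule Set.set_eqI)
    fix j :: nat
    have P1: "a \<le> real j / real Q \<longleftrightarrow> a * real Q \<le> real j" using Q0 by (simp add: le_divide_eq)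
    have P2: "real j / real Q \<le> b \<longleftrightarrow> real j \<le> b * real Q" using Q0 by (simp add: divide_le_eq)
    have P3: "a * real Q \<le> real j \<longleftrightarrow> nat \<lceil>a * real Q\<rceil> \<le> j"
    proof -
      have "a * real Q \<le> real j \<longleftrightarrow> \<lceil>a * real Q\<rceil> \<le> int j" by (simp add: ceiling_le_iff)
      also have "\<dots> \<longleftrightarrow> nat \<lceil>a * real Q\<rceil> \<le> j" by (simp add: nat_le_iff)
      finally show ?thesis .
    qed
    have P4: "real j \<le> b * real Q \<longleftrightarrow> j \<le> nat \<lfloor>b * real Q\<rfloor>"
    proof -
      have "real j \<le> b * real Q \<longleftrightarrow> int j \<le> \<lfloor>b * real Q\<rfloor>" by (simp add: le_floor_iff)
      also have "\<dots> \<longleftrightarrow> j \<le> nat \<lfloor>b * real Q\<rfloor>"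
      proof -
        have "\<lfloor>b * real Q\<rfloor> \<ge> 0" using assms Q0 by simp
        then show ?thesis by (simp add: le_nat_iff)
      qed
      finally show ?thesis .
    qed
    have P5: "real j \<le> b * real Q \<Longrightarrow> j < Q" using bQ by linarith
    show "j \<in> {j\<in>{..<Q}. a \<le> real j / real Q \<and> real j / real Q \<le> b} \<longleftrightarrow> j \<in> {nat \<lceil>a * real Q\<rceil> .. nat \<lfloor>b * real Q\<rfloor>}"
      unfolding mem_Collect_eq lessThan_iff atLeastAtMost_iff P1 P2 P3 P4 using P5 P4 by blast
  qed
  moreover have "(b - a) * real Q - 1 \<le> real (card {nat \<lceil>a * real Q\<rceil> .. nat \<lfloor>b * real Q\<rfloor>})"
  proof -
    have f1: "real_of_int \<lfloor>b * real Q\<rfloor> > b * real Q - 1" by linarith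
    have f2: "real_of_int \<lceil>a * real Q\<rceil> < a * real Q + 1" by linarith
    have aQ0: "a * real Q \<ge> 0" using assms(1) by simp
    have c0: "\<lceil>a * real Q\<rceil> \<ge> 0" using aQ0 by (simp add: zero_le_ceiling)
    have f0: "\<lfloor>b * real Q\<rfloor> \<ge> 0" using assms Q0 by simp
    have "real (card {nat \<lceil>a * real Q\<rceil> .. nat \<lfloor>b * real Q\<rfloor>}) = real (Suc (nat \<lfloor>b * real Q\<rfloor>) - nat \<lceil>a * real Q\<rceil>)"
      by simp
    moreover have "real (Suc (nat \<lfloor>b * real Q\<rfloor>) - nat \<lceil>a * real Q\<rceil>) \<ge> real_of_int \<lfloor>b * real Q\<rfloor> + 1 - real_of_int \<lceil>a * real Q\<rceil>"
      using c0 f0 by (simp add: of_nat_diff) linarith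
    ultimately show ?thesis using f1 f2 by (simp add: algebra_simps)
  qed
  ultimately show ?thesis by simp
qed

lemma e_fun_inj01:
  assumes "e_fun y = e_fun y'" "0 \<le> y" "y < 1" "0 \<le> y'" "y' < 1"
  shows "y = y'"
proof -
  have "e_fun (y - y') * e_fun y' = e_fun y'" using assms(1) by (simp add: e_fun_add[symmetric])
  moreover have "e_fun y' \<noteq> 0" unfolding e_fun_def by simp
  ultimately have "e_fun (y - y') = 1" by simp
  then obtain k::int where k: "y - y' = of_int k" using e_fun_eq_1 by blast
  have "of_int k < (1::real)" "of_int k > (-1::real)" using assms k by linarith+
  then have "k = 0" by linarith
  then show ?thesis using k by simp
qed

lemma approx_real:
  fixes u :: "real \<Rightarrow> real" and \<eta> :: real
  assumes RI: "riemann_integrable_real01 u" and \<eta>: "\<eta> > 0"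
  shows "\<exists>g. real_polynomial_function (g :: complex \<Rightarrow> real) \<and>
           (\<exists>Q0. \<forall>Q\<ge>Q0. (\<Sum>j<Q. (u (real j / real Q) - g (e_fun (real j / real Q)))\<^sup>2) \<le> \<eta> * real Q)"
proof -
  from RI have bd: "bounded (u ` {0..1})" unfolding riemann_integrable_real01_def by blast
  then obtain B where B0: "B > 0" and B: "\<And>y. y \<in> {0..1} \<Longrightarrow> \<bar>u y\<bar> \<le> B"
    unfolding bounded_pos by auto
  define e where "e = \<eta> / (16 * B)"
  have e0: "e > 0" using \<eta> B0 by (simp add: e_def)
  from RI e0 obtain n x where x0: "x 0 = 0" and xn: "x n = (1::real)" and xinc: "\<forall>i<n. x i < x (Suc i)"
    and xS: "(\<Sum>i<n. (Sup (u ` {x i..x (Suc i)}) - Inf (u ` {x i..x (Suc i)})) * (x (Suc i) - x i)) < e"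
    unfolding riemann_integrable_real01_def by blast
  define M where "M i = Sup (u ` {x i..x (Suc i)})" for i
  define m where "m i = Inf (u ` {x i..x (Suc i)})" for i
  define \<Delta> where "\<Delta> i = x (Suc i) - x i" for i
  have SMm: "(\<Sum>i<n. (M i - m i) * \<Delta> i) < e" using xS by (simp add: M_def m_def \<Delta>_def)
  have n0: "n > 0" using x0 xn by (cases n) auto
  have xmono: "x i \<le> x j" if "i \<le> j" "j \<le> n" for i j
    using that
  proof (induction j)
    case 0 then show ?case by simp
  next
    case (Suc j)
    show ?case
    proof (cases "i = Suc j")
      case True then show ?thesis by simp
    next
      case False
      then have "i \<le> j" using Suc.prems by simp
      then have "x i \<le> x j" using Suc by simp
      also have "x j < x (Suc j)" using xinc Suc.prems by simp
      finally show ?thesis by simp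
    qed
  qed
  have xin: "0 \<le> x i \<and> x i \<le> 1" if "i \<le> n" for i
    using xmono[of 0 i] xmono[of i n] that x0 xn by simp
  have \<Delta>0: "\<Delta> i > 0" if "i < n" for i using xinc that by (simp add: \<Delta>_def)
  have sub01: "{x i..x (Suc i)} \<subseteq> {0..1}" if "i < n" for i
    using xin[of i] xin[of "Suc i"] that by auto
  have ub: "-B \<le> u y \<and> u y \<le> B" if "i < n" "y \<in> {x i..x (Suc i)}" for i y
  proof -
    have "y \<in> {0..1}" using sub01[OF that(1)] that(2) by blast
    then have "\<bar>u y\<bar> \<le> B" by (rule B)
    then show ?thesis by (simp add: abs_le_iff)
  qed
  have bnd: "m i \<le> u y \<and> u y \<le> M i" if "i < n" "y \<in> {x i..x (Suc i)}" for i y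
  proof -
    have bdd: "bdd_above (u ` {x i..x (Suc i)})" "bdd_below (u ` {x i..x (Suc i)})"
      using ub[OF that(1)] by (intro bdd_aboveI2[where M=B] bdd_belowI2[where m="-B"]; blast)+
    show ?thesis unfolding M_def m_def using that bdd by (auto intro: cInf_lower cSup_upper)
  qed
  have mM: "-B \<le> m i \<and> M i \<le> B \<and> m i \<le> M i" if "i < n" for i
  proof -
    have ne: "{x i..x (Suc i)} \<noteq> {}" using xinc that by auto
    have "\<And>y. y \<in> {x i..x (Suc i)} \<Longrightarrow> -B \<le> u y \<and> u y \<le> B" using ub[OF that] by blast
    then have "-B \<le> m i" "M i \<le> B" unfolding M_def m_def using ne
      by (auto intro!: cInf_greatest cSup_least)
    moreover obtain y where "y \<in> {x i..x (Suc i)}" using ne by blast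
    ultimately show ?thesis using bnd[OF that] by force
  qed
  define \<delta>0 where "\<delta>0 = Min (\<Delta> ` {..<n})"
  have \<delta>00: "\<delta>0 > 0" unfolding \<delta>0_def using n0 \<Delta>0 by (subst Min_gr_iff) auto
  have \<delta>0le: "\<delta>0 \<le> \<Delta> i" if "i < n" for i unfolding \<delta>0_def using that by simp
  define r where "r = min (\<delta>0 / 3) (\<eta> / (64 * B^2 * real n))"
  have r0: "r > 0" using \<delta>00 \<eta> B0 n0 by (simp add: r_def)
  have r\<Delta>: "2 * r < \<Delta> i" if "i < n" for i using \<delta>0le[OF that] \<delta>00 r_def by linarith
  have rle: "r \<le> \<eta> / (64 * B^2 * real n)" by (simp add: r_def)
  define G where "G i = {x i + r .. x (Suc i) - r}" for i
  have Gsub: "G i \<subseteq> {x i..x (Suc i)}" for i using r0 by (auto simp: G_def)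
  have G01: "0 \<le> y \<and> y < 1" if "i < n" "y \<in> G i" for i y
    using that xin[of i] xin[of "Suc i"] r0 by (auto simp: G_def)
  have Gdisj: "i = i'" if "i < n" "i' < n" "y \<in> G i" "y \<in> G i'" for i i' y
  proof (rule ccontr)
    assume "i \<noteq> i'"
    then consider "i < i'" | "i' < i" by linarith
    then show False
    proof cases
      case 1
      then have "x (Suc i) \<le> x i'" using xmono that by simp
      then show False using that r0 by (auto simp: G_def)
    next
      case 2
      then have "x (Suc i') \<le> x i" using xmono that by simp
      then show False using that r0 by (auto simp: G_def)
    qed
  qed
  have eGdisj: "i = i'" if ii: "i < n" "i' < n" and zz: "z \<in> e_fun ` G i" "z \<in> e_fun ` G i'" for i i' z
  proof -
    obtain y y' where y: "y \<in> G i" "z = e_fun y" and y': "y' \<in> G i'" "z = e_fun y'" using zz by blast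
    have a1: "0 \<le> y \<and> y < 1" using G01 ii y by blast
    have a2: "0 \<le> y' \<and> y' < 1" using G01 ii y' by blast
    have "y = y'" using e_fun_inj01[of y y'] y y' a1 a2 by simp
    then show ?thesis using Gdisj ii y y' by blast
  qed
  define K where "K = (\<Union>i\<in>{..<n}. e_fun ` G i)"
  define f0 where "f0 z = m (SOME i. i < n \<and> z \<in> e_fun ` G i)" for z
  have f0eq: "f0 z = m i" if "i < n" "z \<in> e_fun ` G i" for i z
  proof -
    have "(SOME i. i < n \<and> z \<in> e_fun ` G i) = i"
      using that eGdisj by (intro some_equality) auto
    then show ?thesis by (simp add: f0_def)
  qed
  have clG: "closed (e_fun ` G i)" for i
    by (intro compact_imp_closed compact_continuous_image continuous_on_subset[OF continuous_e_fun])
       (auto simp: G_def)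
  have contf0: "continuous_on K f0" unfolding K_def
  proof (rule continuous_on_closed_Union)
    fix i assume i: "i \<in> {..<n}"
    show "continuous_on (e_fun ` G i) f0"
      by (rule continuous_on_eq[OF continuous_on_const[of _ "m i"]]) (use f0eq i in auto)
  qed (auto simp: clG)
  have clK: "closedin (top_of_set UNIV) K" unfolding K_def using clG by auto
  obtain c where contc: "continuous_on UNIV c" and cK: "\<And>z. z \<in> K \<Longrightarrow> c z = f0 z"
    and cB: "\<And>z. c z \<in> cbox (-B) B"
  proof (rule Tietze_closed_interval_1[OF contf0 clK, of "-B" B])
    show "-B \<le> B" using B0 by simp
    fix z assume "z \<in> K"
    then obtain i where "i < n" "z \<in> e_fun ` G i" unfolding K_def by blast
    then have "f0 z = m i" "-B \<le> m i" "m i \<le> M i" "M i \<le> B" using f0eq mM by auto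
    then show "f0 z \<in> cbox (-B) B" by simp
  qed auto
  define \<eta>1 where "\<eta>1 = sqrt (\<eta> / 8)"
  have \<eta>10: "\<eta>1 > 0" using \<eta> by (simp add: \<eta>1_def)
  have \<eta>1sq: "\<eta>1^2 = \<eta> / 8" using \<eta> by (simp add: \<eta>1_def)
  obtain g where pg: "real_polynomial_function g" and gc: "\<And>z. z \<in> sphere 0 1 \<Longrightarrow> \<bar>c z - g z\<bar> < \<eta>1"
    using Stone_Weierstrass_real_polynomial_function[of "sphere (0::complex) 1" c \<eta>1]
      continuous_on_subset[OF contc] \<eta>10 by auto
  define cc where "cc i = 8 * B^2 - 4 * B * (M i - m i)" for i
  have cc0: "cc i \<ge> 0" if "i < n" for i
  proof -
    have "M i - m i \<le> 2 * B" using mM[OF that] by simp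
    then have "4 * B * (M i - m i) \<le> 4 * B * (2 * B)" using B0 by (intro mult_left_mono) auto
    then show ?thesis by (simp add: cc_def power2_eq_square)
  qed
  have point: "(u y - g (e_fun y))\<^sup>2 \<le> 2 * \<eta>1^2 + 8 * B^2 - (\<Sum>i<n. if y \<in> G i then cc i else 0)"
    if y01: "0 \<le> y" "y < 1" for y
  proof -
    define D where "D = \<bar>u y - c (e_fun y)\<bar>"
    have "\<bar>c (e_fun y) - g (e_fun y)\<bar> < \<eta>1" using gc by simp
    then have "\<bar>u y - g (e_fun y)\<bar> \<le> D + \<eta>1" unfolding D_def by linarith
    then have "(u y - g (e_fun y))\<^sup>2 \<le> (D + \<eta>1)\<^sup>2"
      by (metis abs_ge_zero power2_abs power_mono)
    also have "\<dots> \<le> 2 * D^2 + 2 * \<eta>1^2"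
    proof -
      have "0 \<le> (D - \<eta>1)\<^sup>2" by simp
      then show ?thesis by (simp add: power2_eq_square algebra_simps)
    qed
    finally have A: "(u y - g (e_fun y))\<^sup>2 \<le> 2 * D^2 + 2 * \<eta>1^2" .
    have D0: "D \<ge> 0" by (simp add: D_def)
    show ?thesis
    proof (cases "\<exists>i<n. y \<in> G i")
      case True
      then obtain i where i: "i < n" "y \<in> G i" by blast
      have sum_eq: "(\<Sum>i'<n. if y \<in> G i' then cc i' else 0) = (\<Sum>i'<n. if i' = i then cc i' else 0)"
        by (intro sum.cong refl) (use Gdisj i in auto)
      also have "\<dots> = cc i" using i by simp
      finally have sum_eq: "(\<Sum>i'<n. if y \<in> G i' then cc i' else 0) = cc i" .
      have "e_fun y \<in> K" unfolding K_def using i by blast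
      then have "c (e_fun y) = m i" using cK f0eq i by auto
      moreover have "m i \<le> u y \<and> u y \<le> M i" using bnd[OF i(1)] Gsub i by blast
      ultimately have DM: "D \<le> M i - m i" unfolding D_def by linarith
      have "M i - m i \<le> 2 * B" using mM[OF i(1)] by simp
      then have "D^2 \<le> (M i - m i) * (2 * B)"
        using DM D0 by (simp add: power2_eq_square mult_mono)
      then show ?thesis using A sum_eq by (simp add: cc_def algebra_simps)
    next
      case False
      then have sum_eq: "(\<Sum>i<n. if y \<in> G i then cc i else 0) = 0" by (intro sum.neutral) auto
      have "\<bar>u y\<bar> \<le> B" using B y01 by simp
      moreover have "\<bar>c (e_fun y)\<bar> \<le> B" using cB[of "e_fun y"] by (simp add: abs_le_iff)
      ultimately have "D \<le> 2 * B" unfolding D_def by linarith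
      then have "D^2 \<le> (2*B)^2" using D0 by (intro power_mono) auto
      then show ?thesis using A sum_eq by (simp add: power2_eq_square)
    qed
  qed
  define Q0 where "Q0 = nat \<lceil>32 * B^2 * real n / \<eta>\<rceil> + 1"
  have main: "(\<Sum>j<Q. (u (real j / real Q) - g (e_fun (real j / real Q)))\<^sup>2) \<le> \<eta> * real Q" if Q: "Q \<ge> Q0" for Q
  proof -
    have Q0': "Q > 0" using Q by (simp add: Q0_def)
    define J where "J i = {j\<in>{..<Q}. x i + r \<le> real j / real Q \<and> real j / real Q \<le> x (Suc i) - r}" for i
    have yj: "0 \<le> real j / real Q \<and> real j / real Q < 1" if "j < Q" for j using that Q0' by simp
    have "(\<Sum>j<Q. (u (real j / real Q) - g (e_fun (real j / real Q)))\<^sup>2)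
        \<le> (\<Sum>j<Q. 2 * \<eta>1^2 + 8 * B^2 - (\<Sum>i<n. if real j / real Q \<in> G i then cc i else 0))"
      by (intro sum_mono point) (use yj in auto)
    also have "\<dots> = real Q * (2 * \<eta>1^2 + 8 * B^2) - (\<Sum>i<n. cc i * real (card (J i)))"
    proof -
      have "(\<Sum>j<Q. \<Sum>i<n. if real j / real Q \<in> G i then cc i else 0) = (\<Sum>i<n. \<Sum>j<Q. if real j / real Q \<in> G i then cc i else 0)"
        by (rule sum.swap)
      also have "\<dots> = (\<Sum>i<n. cc i * real (card (J i)))"
      proof (intro sum.cong refl)
        fix i
        have "(\<Sum>j<Q. if real j / real Q \<in> G i then cc i else 0) = (\<Sum>j\<in>J i. cc i)"
          unfolding J_def G_def atLeastAtMost_iff by (rule sum.inter_filter[symmetric]) simp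
        then show "(\<Sum>j<Q. if real j / real Q \<in> G i then cc i else 0) = cc i * real (card (J i))" by simp
      qed
      finally show ?thesis by (simp add: sum_subtractf)
    qed
    also have "\<dots> \<le> real Q * (2 * \<eta>1^2 + 8 * B^2) - (\<Sum>i<n. cc i * ((\<Delta> i - 2 * r) * real Q - 1))"
    proof -
      have "(\<Sum>i<n. cc i * ((\<Delta> i - 2 * r) * real Q - 1)) \<le> (\<Sum>i<n. cc i * real (card (J i)))"
      proof (intro sum_mono mult_left_mono)
        fix i assume i: "i \<in> {..<n}"
        have "0 \<le> x i + r" using xin[of i] i r0 by simp
        moreover have "x i + r \<le> x (Suc i) - r" using r\<Delta>[of i] i by (simp add: \<Delta>_def)
        moreover have "x (Suc i) - r < 1" using xin[of "Suc i"] i r0 by simp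
        ultimately have "((x (Suc i) - r) - (x i + r)) * real Q - 1 \<le> real (card (J i))"
          unfolding J_def by (rule count_lower[OF _ _ _ Q0'])
        then show "(\<Delta> i - 2 * r) * real Q - 1 \<le> real (card (J i))" by (simp add: \<Delta>_def algebra_simps)
        show "0 \<le> cc i" using cc0 i by simp
      qed
      then show ?thesis by simp
    qed
    also have "\<dots> = real Q * (2 * \<eta>1^2) + 4 * B * real Q * (\<Sum>i<n. (M i - m i) * \<Delta> i) + (2 * r * real Q + 1) * (\<Sum>i<n. cc i)"
    proof -
      have tel: "(\<Sum>i<n. \<Delta> i) = 1" unfolding \<Delta>_def using sum_lessThan_telescope[of x n] x0 xn by simp
      have "(\<Sum>i<n. cc i * ((\<Delta> i - 2 * r) * real Q - 1))
          = real Q * (\<Sum>i<n. cc i * \<Delta> i) - (2 * r * real Q + 1) * (\<Sum>i<n. cc i)"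
        by (simp add: algebra_simps sum_subtractf sum_distrib_left sum_distrib_right sum.distrib)
      moreover have "(\<Sum>i<n. cc i * \<Delta> i) = 8 * B^2 * (\<Sum>i<n. \<Delta> i) - 4 * B * (\<Sum>i<n. (M i - m i) * \<Delta> i)"
        by (simp add: cc_def algebra_simps sum_subtractf sum_distrib_left sum_distrib_right sum.distrib)
      ultimately have H: "(\<Sum>i<n. cc i * ((\<Delta> i - 2 * r) * real Q - 1))
          = real Q * (8 * B^2 - 4 * B * (\<Sum>i<n. (M i - m i) * \<Delta> i)) - (2 * r * real Q + 1) * (\<Sum>i<n. cc i)"
        using tel by simp
      define S1 where "S1 = (\<Sum>i<n. (M i - m i) * \<Delta> i)"
      define C1 where "C1 = (\<Sum>i<n. cc i)"
      show ?thesis unfolding H S1_def[symmetric] C1_def[symmetric] by (simp add: algebra_simps)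
    qed
    also have "\<dots> \<le> real Q * (\<eta> / 4) + 4 * B * real Q * e + (2 * r * real Q + 1) * (8 * B^2 * real n)"
    proof -
      have t1: "real Q * (2 * \<eta>1^2) = real Q * (\<eta> / 4)" using \<eta>1sq by simp
      have t2: "4 * B * real Q * (\<Sum>i<n. (M i - m i) * \<Delta> i) \<le> 4 * B * real Q * e"
        using SMm B0 Q0' by (intro mult_left_mono) auto
      have "(\<Sum>i<n. cc i) \<le> (\<Sum>i<n. 8 * B^2)"
        by (intro sum_mono) (use mM in \<open>auto simp: cc_def intro!: mult_nonneg_nonneg\<close>, use B0 in simp)
      then have "(\<Sum>i<n. cc i) \<le> 8 * B^2 * real n" by (simp add: mult.commute)
      then have t3: "(2 * r * real Q + 1) * (\<Sum>i<n. cc i) \<le> (2 * r * real Q + 1) * (8 * B^2 * real n)"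
        using r0 by (intro mult_left_mono) auto
      show ?thesis using t1 t2 t3 by linarith
    qed
    also have "\<dots> \<le> \<eta> * real Q"
    proof -
      have f1: "4 * B * real Q * e = real Q * (\<eta> / 4)" using B0 by (simp add: e_def field_simps)
      have f2: "2 * r * real Q * (8 * B^2 * real n) \<le> real Q * (\<eta> / 4)"
      proof -
        have "r * (64 * B^2 * real n) \<le> \<eta>" using rle B0 n0 by (simp add: field_simps)
        then have "2 * r * (8 * B^2 * real n) \<le> \<eta> / 4" by simp
        then show ?thesis using Q0' by (simp add: mult.commute mult.left_commute mult_left_mono)
      qed
      have f3: "8 * B^2 * real n \<le> real Q * (\<eta> / 4)"
      proof -
        have "32 * B^2 * real n / \<eta> \<le> real Q" using Q unfolding Q0_def by linarith
        then have "32 * B^2 * real n \<le> real Q * \<eta>" using \<eta> by (simp add: divide_le_eq)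
        then show ?thesis by simp
      qed
      have ex: "(2 * r * real Q + 1) * (8 * B^2 * real n) = 2 * r * real Q * (8 * B^2 * real n) + 8 * B^2 * real n"
        by (simp add: distrib_right)
      have ex2: "\<eta> * real Q = real Q * (\<eta> / 4) + real Q * (\<eta> / 4) + real Q * (\<eta> / 4) + real Q * (\<eta> / 4)" by simp
      show ?thesis unfolding ex using f1 f2 f3 ex2 by linarith
    qed
    finally show ?thesis .
  qed
  show ?thesis using pg main by blast
qed

lemma Q_large:
  fixes q d Q0 :: nat
  assumes "q > 0" "d dvd q" "Q0 * Q0 \<le> q"
  shows "Q0 \<le> 2 * q div gcd d (q div d)"
proof -
  define e where "e = q div d"
  define m where "m = gcd d e"
  define Q where "Q = 2 * q div m"
  have d0: "d > 0" using assms by (metis dvd_0_left_iff gr0I less_irrefl)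
  have de: "d * e = q" using assms(2) by (simp add: e_def)
  have e0: "e > 0" using de assms(1) by (metis gr0I mult_0_right less_irrefl)
  have m0: "m > 0" using d0 by (simp add: m_def)
  have mle: "m * m \<le> q"
  proof -
    have "m \<le> d" "m \<le> e" using d0 e0 by (simp_all add: m_def gcd_le1_nat gcd_le2_nat)
    then have "m * m \<le> d * e" by (rule mult_le_mono)
    then show ?thesis using de by simp
  qed
  have mq: "m dvd 2 * q" using assms(2) unfolding m_def by (metis dvd_mult dvd_trans gcd_dvd1)
  have mQ: "m * Q = 2 * q" using mq by (simp add: Q_def)
  have "2 * (m * m) \<le> m * Q" using mle mQ by simp
  then have "2 * m \<le> Q" using m0 by (simp add: mult.assoc[symmetric] mult.commute[of 2])
  then have "Q * (2 * m) \<le> Q * Q" by simp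
  moreover have "Q * (2 * m) = 2 * (2 * q)" using mQ by (simp add: mult_ac)
  ultimately have qQ: "q \<le> Q * Q" by simp
  show ?thesis
  proof (rule ccontr)
    assume "\<not> Q0 \<le> 2 * q div gcd d (q div d)"
    then have "Q < Q0" by (simp add: Q_def m_def e_def)
    then have "Q * Q < Q0 * Q0" by (simp add: mult_strict_mono)
    then show False using qQ assms(3) by simp
  qed
qed

theorem lemma6p2:
  fixes N :: nat and \<phi> :: "real \<Rightarrow> complex" and \<epsilon> \<delta> :: real
  assumes "N > 0"
    and "on_torus \<phi>" and "riemann_integrable_torus \<phi>"
    and "\<epsilon> > 0" and "\<delta> > 0"
  shows "\<exists>\<psi>\<in>B_torus.
     Limsup (inf sequentially (principal {q. num_divisors q \<le> N}))
       (\<lambda>q. ereal (card {p \<in> units_mod q. norm (gauss_sum \<phi> p q - gauss_sum \<psi> p q) / sqrt (real q) > \<delta>} / real (totient q)))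
       < ereal \<epsilon>"
proof -
  note N0 = assms(1) and eps = assms(4) and del = assms(5)
  define \<eta> where "\<eta> = \<epsilon> * \<delta>^2 / (4 * real N ^ 2)"
  have \<eta>0: "\<eta> > 0" using N0 eps del by (simp add: \<eta>_def)
  from assms(3) have RIre: "riemann_integrable_real01 (\<lambda>x. Re (\<phi> x))" and RIim: "riemann_integrable_real01 (\<lambda>x. Im (\<phi> x))"
    unfolding riemann_integrable_torus_def by auto
  obtain g1 Q1 where g1: "real_polynomial_function (g1 :: complex \<Rightarrow> real)"
    and Q1: "\<And>Q. Q \<ge> Q1 \<Longrightarrow> (\<Sum>j<Q. (Re (\<phi> (real j / real Q)) - g1 (e_fun (real j / real Q)))\<^sup>2) \<le> \<eta> / 2 * real Q"
    using approx_real[OF RIre, of "\<eta>/2"] \<eta>0 by auto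
  obtain g2 Q2 where g2: "real_polynomial_function (g2 :: complex \<Rightarrow> real)"
    and Q2: "\<And>Q. Q \<ge> Q2 \<Longrightarrow> (\<Sum>j<Q. (Im (\<phi> (real j / real Q)) - g2 (e_fun (real j / real Q)))\<^sup>2) \<le> \<eta> / 2 * real Q"
    using approx_real[OF RIim, of "\<eta>/2"] \<eta>0 by auto
  define \<psi> where "\<psi> x = complex_of_real (g1 (e_fun x)) + \<i> * complex_of_real (g2 (e_fun x))" for x
  have tp\<psi>: "tp \<psi>"
    unfolding \<psi>_def by (intro tp_add tp_mult tp_const tp_real_poly g1 g2)
  have cg1: "continuous_on UNIV g1" using g1 by (simp add: real_polynomial_function_eq continuous_on_polymonial_function)
  have cg2: "continuous_on UNIV g2" using g2 by (simp add: real_polynomial_function_eq continuous_on_polymonial_function)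
  have cont\<psi>: "continuous_on UNIV \<psi>"
  proof -
    have "continuous_on UNIV (g1 \<circ> e_fun)" "continuous_on UNIV (g2 \<circ> e_fun)"
      using continuous_on_compose[OF continuous_e_fun] continuous_on_subset[OF cg1] continuous_on_subset[OF cg2]
      by auto
    then show ?thesis unfolding \<psi>_def o_def by (intro continuous_intros)
  qed
  have \<psi>B: "\<psi> \<in> B_torus" by (rule tp_in_B[OF tp\<psi> cont\<psi>])
  define Q0 where "Q0 = max Q1 Q2"
  define F where "F x = (cmod (\<phi> x - \<psi> x))\<^sup>2" for x
  have FQ: "(\<Sum>j<Q. F (real j / real Q)) \<le> \<eta> * real Q" if "Q \<ge> Q0" for Q
  proof -
    have "F y = (Re (\<phi> y) - g1 (e_fun y))\<^sup>2 + (Im (\<phi> y) - g2 (e_fun y))\<^sup>2" for y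
      unfolding F_def cmod_power2 \<psi>_def by simp
    then have "(\<Sum>j<Q. F (real j / real Q)) = (\<Sum>j<Q. (Re (\<phi> (real j / real Q)) - g1 (e_fun (real j / real Q)))\<^sup>2)
        + (\<Sum>j<Q. (Im (\<phi> (real j / real Q)) - g2 (e_fun (real j / real Q)))\<^sup>2)"
      by (simp add: sum.distrib)
    also have "\<dots> \<le> \<eta> / 2 * real Q + \<eta> / 2 * real Q"
      using Q1[of Q] Q2[of Q] that by (simp add: Q0_def)
    finally show ?thesis by simp
  qed
  define R where "R q = real (card {p \<in> units_mod q. norm (gauss_sum \<phi> p q - gauss_sum \<psi> p q) / sqrt (real q) > \<delta>}) / real (totient q)" for q
  have Rbound: "R q \<le> \<epsilon> / 2" if q: "q \<ge> max 1 (Q0 * Q0)" "num_divisors q \<le> N" for q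
  proof -
    have q0: "q > 0" using q by simp
    define f where "f x = \<phi> x - \<psi> x" for x
    have gdiff: "gauss_sum \<phi> p q - gauss_sum \<psi> p q = gauss_sum f p q" for p
      unfolding gauss_sum_def f_def by (simp add: sum_subtractf[symmetric] left_diff_distrib)
    define A where "A = {p \<in> units_mod q. norm (gauss_sum f p q) / sqrt (real q) > \<delta>}"
    have finD: "finite {d. d dvd q}" using q0 by simp
    have SM: "(\<Sum>p\<in>{1..q}. (cmod (gauss_sum f p q))\<^sup>2) \<le> 2 * real q * real q * real N * \<eta>"
    proof -
      have "(\<Sum>p\<in>{1..q}. (cmod (gauss_sum f p q))\<^sup>2) \<le> real q * (\<Sum>d\<in>{d. d dvd q}.
         real (gcd d (q div d)) * (\<Sum>j<2*q div gcd d (q div d). (cmod (f (real j / real (2*q div gcd d (q div d)))))\<^sup>2))"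
        by (rule second_moment[OF q0])
      also have "\<dots> \<le> real q * (\<Sum>d\<in>{d. d dvd q}. 2 * real q * \<eta>)"
      proof (intro mult_left_mono sum_mono)
        fix d assume d: "d \<in> {d. d dvd q}"
        define m where "m = gcd d (q div d)"
        define Q where "Q = 2 * q div m"
        have d0: "d > 0" using d q0 by (metis dvd_0_left_iff gr0I mem_Collect_eq)
        have m0: "m > 0" using d0 by (simp add: m_def)
        have mq: "m dvd 2 * q" using d unfolding m_def by (metis dvd_mult dvd_trans gcd_dvd1 mem_Collect_eq)
        have mQ: "real m * real Q = 2 * real q" using mq unfolding Q_def by (metis dvd_mult_div_cancel of_nat_mult of_nat_numeral)
        have QQ0: "Q \<ge> Q0" unfolding Q_def m_def using Q_large[OF q0, of d Q0] d q by simp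
        have "(\<Sum>j<Q. (cmod (f (real j / real Q)))\<^sup>2) \<le> \<eta> * real Q"
          using FQ[OF QQ0] by (simp add: F_def f_def)
        then have "real m * (\<Sum>j<Q. (cmod (f (real j / real Q)))\<^sup>2) \<le> real m * (\<eta> * real Q)"
          by (intro mult_left_mono) auto
        also have "\<dots> = 2 * real q * \<eta>" using mQ by (simp add: mult_ac)
        finally show "real (gcd d (q div d)) * (\<Sum>j<2*q div gcd d (q div d). (cmod (f (real j / real (2*q div gcd d (q div d)))))\<^sup>2) \<le> 2 * real q * \<eta>"
          by (simp add: m_def Q_def)
      qed simp
      also have "\<dots> = real q * (real (num_divisors q) * (2 * real q * \<eta>))"
        by (simp add: num_divisors_def)
      also have "\<dots> \<le> real q * (real N * (2 * real q * \<eta>))"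
        using q(2) \<eta>0 by (intro mult_left_mono mult_right_mono) auto
      finally show ?thesis by (simp add: mult_ac)
    qed
    have Usub: "units_mod q \<subseteq> {1..q}" by (auto simp: units_mod_def)
    have cardA: "real (card A) * (\<delta>^2 * real q) \<le> 2 * real q * real q * real N * \<eta>"
    proof -
      have "real (card A) * (\<delta>^2 * real q) = (\<Sum>p\<in>A. \<delta>^2 * real q)" by simp
      also have "\<dots> \<le> (\<Sum>p\<in>A. (cmod (gauss_sum f p q))\<^sup>2)"
      proof (rule sum_mono)
        fix p assume "p \<in> A"
        then have "\<delta> < norm (gauss_sum f p q) / sqrt (real q)" by (simp add: A_def)
        then have "\<delta> * sqrt (real q) < norm (gauss_sum f p q)" using q0 by (simp add: less_divide_eq)
        then have "(\<delta> * sqrt (real q))^2 \<le> (norm (gauss_sum f p q))^2"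
          using del by (intro power_mono) auto
        then show "\<delta>^2 * real q \<le> (cmod (gauss_sum f p q))\<^sup>2" by (simp add: power_mult_distrib)
      qed
      also have "\<dots> \<le> (\<Sum>p\<in>{1..q}. (cmod (gauss_sum f p q))\<^sup>2)"
        using Usub by (intro sum_mono2) (auto simp: A_def)
      finally show ?thesis using SM by linarith
    qed
    have tot: "real q \<le> real (totient q) * real N"
    proof -
      have "real q \<le> real (totient q) * real (num_divisors q)" by (rule totient_divisors[OF q0])
      also have "\<dots> \<le> real (totient q) * real N" using q(2) by (intro mult_left_mono) auto
      finally show ?thesis .
    qed
    have tot0: "real (totient q) > 0" using tot q0 by (metis mult_eq_0_iff of_nat_0 of_nat_0_less_iff not_le not_gr0)
    have "real (card A) * \<delta>^2 \<le> 2 * real q * real N * \<eta>"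
    proof -
      have "real (card A) * \<delta>^2 * real q \<le> (2 * real q * real N * \<eta>) * real q" using cardA by (simp add: mult_ac)
      then show ?thesis using q0 by (simp add: mult_ac)
    qed
    then have "real (card A) \<le> 2 * real q * real N * \<eta> / \<delta>^2" using del by (simp add: le_divide_eq)
    also have "\<dots> \<le> 2 * (real (totient q) * real N) * real N * \<eta> / \<delta>^2"
      using tot N0 \<eta>0 del by (intro divide_right_mono mult_right_mono mult_left_mono) auto
    also have "\<dots> = real (totient q) * (\<epsilon> / 2)"
      using N0 del by (simp add: \<eta>_def field_simps power2_eq_square)
    finally have "real (card A) \<le> real (totient q) * (\<epsilon> / 2)" .
    then have "real (card A) / real (totient q) \<le> \<epsilon> / 2" using tot0 by (simp add: divide_le_eq mult.commute)
    then show ?thesis unfolding R_def A_def gdiff .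
  qed
  have ev: "eventually (\<lambda>q. ereal (R q) \<le> ereal (\<epsilon> / 2)) (inf sequentially (principal {q. num_divisors q \<le> N}))"
    unfolding eventually_inf_principal eventually_sequentially
  proof (intro exI[of _ "max 1 (Q0 * Q0)"] allI impI)
    fix q assume "q \<ge> max 1 (Q0 * Q0)" "q \<in> {q. num_divisors q \<le> N}"
    then show "ereal (R q) \<le> ereal (\<epsilon> / 2)" using Rbound by simp
  qed
  have "Limsup (inf sequentially (principal {q. num_divisors q \<le> N})) (\<lambda>q. ereal (R q)) \<le> ereal (\<epsilon> / 2)"
    by (rule Limsup_bounded[OF ev])
  also have "\<dots> < ereal \<epsilon>" using eps by simp
  finally show ?thesis using \<psi>B unfolding R_def by blast
qed

end
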